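(* Let $q\ge 2$ and $m\ge 1$. The number of different unordered partitions of ${\bf Z}_q^{(q^m-1)/(q-1)}$ into subcubes whose star matrices are fractal matrices with parameters $q$ and $m$ is exactly $\left(\frac{q^m-1}{q-1}\right)!$.
   Context: A subcube of ${\bf Z}_q^n$ is obtained by fixing some coordinates and letting the others run through ${\bf Z}_q$; its star pattern is the vector over ${\bf Z}_q\cup\{*\}$ with the fixed values in fixed coordinates and $*$ in free ones. The star matrix of a partition of ${\bf Z}_q^n$ into subcubes is the matrix whose rows are the star patterns of the subcubes. The matrices $M_{q,m}$ are defined recursively: $M_{q,0}$ has one row and zero columns; for $m\ge1$, $M_{q,m}$ consists of $q$ horizontal blocks indexed by $a=0,\dots,q-1$, each with $q^{m-1}$ rows; the first column has entry $a$ in every row of block $a$; the remaining columns are divided into $q$ vertical stripes of width equal to the number of columns of $M_{q,m-1}$, and in block $a$ the $a$-th stripe is a copy of $M_{q,m-1}$ while all other stripes of block $a$ consist only of $*$. A fractal matrix with parameters $q,m$ is any matrix obtained from $M_{q,m}$ by permuting rows and columns. ($M_{q,m}$ has $q^m$ rows and $\frac{q^m-1}{q-1}$ columns.) *)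

theory Defs
  imports Main "HOL-Library.Multiset"
begin

text \<open>A star pattern of length n over Z_q: a list of length n with entries
  Some a (fixed coordinate, a < q) or None (the star, a free coordinate).\<close>

definition zq_space :: "nat \<Rightarrow> nat \<Rightarrow> nat list set" where
  "zq_space q n = {x. length x = n \<and> (\<forall>i<n. x ! i < q)}"

definition valid_pattern :: "nat \<Rightarrow> nat \<Rightarrow> nat option list \<Rightarrow> bool" where
  "valid_pattern q n p \<longleftrightarrow> length p = n \<and> (\<forall>i<n. \<forall>a. p ! i = Some a \<longrightarrow> a < q)"

definition subcube :: "nat \<Rightarrow> nat option list \<Rightarrow> nat list set" where
  "subcube q p = {x. length x = length p \<and> (\<forall>i<length p. x ! i < q \<and>
      (case p ! i of None \<Rightarrow> True | Some a \<Rightarrow> x ! i = a))}"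

definition subcube_partition :: "nat \<Rightarrow> nat \<Rightarrow> nat option list set \<Rightarrow> bool" where
  "subcube_partition q n P \<longleftrightarrow>
     (\<forall>p\<in>P. valid_pattern q n p) \<and>
     (\<forall>p\<in>P. \<forall>p'\<in>P. p \<noteq> p' \<longrightarrow> subcube q p \<inter> subcube q p' = {}) \<and>
     (\<Union>p\<in>P. subcube q p) = zq_space q n"

fun fractal_cols :: "nat \<Rightarrow> nat \<Rightarrow> nat" where
  "fractal_cols q 0 = 0"
| "fractal_cols q (Suc m) = 1 + q * fractal_cols q m"

fun fractal_rows :: "nat \<Rightarrow> nat \<Rightarrow> nat option list list" where
  "fractal_rows q 0 = [[]]"
| "fractal_rows q (Suc m) =
     concat (map (\<lambda>a. map (\<lambda>r. Some a #
        concat (map (\<lambda>b. if b = a then r else replicate (fractal_cols q m) None) [0..<q]))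
       (fractal_rows q m)) [0..<q])"

definition permute_cols :: "(nat \<Rightarrow> nat) \<Rightarrow> nat option list \<Rightarrow> nat option list" where
  "permute_cols \<sigma> r = map (\<lambda>j. r ! \<sigma> j) [0..<length r]"

text \<open>The star matrix of P (rows = patterns of P, row order irrelevant) is a
  fractal matrix with parameters q, m: it arises from M_{q,m} by permuting
  rows and columns (compared as multisets of rows).\<close>
definition fractal_star :: "nat \<Rightarrow> nat \<Rightarrow> nat option list set \<Rightarrow> bool" where
  "fractal_star q m P \<longleftrightarrow> finite P \<and>
     (\<exists>\<sigma>. bij_betw \<sigma> {..<fractal_cols q m} {..<fractal_cols q m} \<and>
        mset_set P = mset (map (permute_cols \<sigma>) (fractal_rows q m)))"

end

theory Submission
  imports Defs "HOL-Combinatorics.Permutations"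
begin

definition rowf :: "nat \<Rightarrow> nat \<Rightarrow> nat \<Rightarrow> nat option list \<Rightarrow> nat option list" where
  "rowf q n a r = Some a # concat (map (\<lambda>b. if b = a then r else replicate n None) [0..<q])"

lemma rows_Suc: "fractal_rows q (Suc m) =
   concat (map (\<lambda>a. map (\<lambda>r. rowf q (fractal_cols q m) a r) (fractal_rows q m)) [0..<q])"
  by (simp add: rowf_def)

lemma set_rows_Suc: "set (fractal_rows q (Suc m)) =
   {rowf q (fractal_cols q m) a r | a r. a < q \<and> r \<in> set (fractal_rows q m)}"
  unfolding rows_Suc by auto blast

lemma concat_len_blocks:
  assumes "\<And>b. b < q \<Longrightarrow> length (f b) = n"
  shows "length (concat (map f [0..<q])) = q * n"
  using assms by (induction q) auto

lemma mem_rows_Suc: "a < q \<Longrightarrow> r \<in> set (fractal_rows q m) \<Longrightarrow>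
   rowf q (fractal_cols q m) a r \<in> set (fractal_rows q (Suc m))"
  unfolding set_rows_Suc by blast

lemma concat_nth_blocks:
  assumes "\<And>b. b < q \<Longrightarrow> length (f b) = n" "b < q" "k < n"
  shows "concat (map f [0..<q]) ! (b*n+k) = f b ! k"
  using assms
proof (induction q)
  case 0 then show ?case by simp
next
  case (Suc q)
  have len: "length (concat (map f [0..<q])) = q * n"
    using Suc.prems(1) by (intro concat_len_blocks) auto
  show ?case
  proof (cases "b < q")
    case True
    have "b*n+k < q*n"
    proof -
      have "b*n + k < b*n + n" using Suc.prems by simp
      also have "\<dots> = Suc b * n" by simp
      also have "\<dots> \<le> q * n" using True by (intro mult_right_mono) auto
      finally show ?thesis .
    qed
    then show ?thesis using Suc True len by (simp add: nth_append)
  next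
    case False
    then have "b = q" using Suc.prems by simp
    then show ?thesis using len by (simp add: nth_append)
  qed
qed


lemma rowf_length: "length r = n \<Longrightarrow> length (rowf q n a r) = 1 + q * n"
  unfolding rowf_def using concat_len_blocks[of q "\<lambda>b. if b = a then r else replicate n None" n] by auto

lemma rowf_nth0: "rowf q n a r ! 0 = Some a"
  by (simp add: rowf_def)

lemma rowf_nth: assumes "length r = n" "b < q" "k < n"
  shows "rowf q n a r ! (1 + b*n + k) = (if b = a then r ! k else None)"
proof -
  have "rowf q n a r ! (1+b*n+k) = concat (map (\<lambda>b. if b = a then r else replicate n None) [0..<q]) ! (b*n+k)"
    by (simp add: rowf_def)
  also have "\<dots> = (if b=a then r else replicate n None) ! k"
    by (rule concat_nth_blocks) (use assms in auto)
  finally show ?thesis using assms by simp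
qed

lemma decomp: "(j::nat) < 1 + q*n \<Longrightarrow> j \<noteq> 0 \<Longrightarrow> \<exists>b<q. \<exists>k<n. j = 1 + b*n + k"
proof -
  assume a: "j < 1 + q*n" "j \<noteq> 0"
  then have np: "n > 0" by (cases n) auto
  let ?b = "(j-1) div n" and ?k = "(j-1) mod n"
  have "j - 1 = ?b * n + ?k" by simp
  moreover have "?b < q" using a np by (simp add: div_less_iff_less_mult)
  moreover have "?k < n" using np by simp
  ultimately have "j = 1 + ?b*n + ?k" "?b < q" "?k < n" using a by auto
  then show ?thesis by blast
qed

lemma stripe_unique: "(b::nat) < q \<Longrightarrow> k < n \<Longrightarrow> b' < q \<Longrightarrow> k' < n \<Longrightarrow>
   (1 + b*n + k = 1 + b'*n + k') \<longleftrightarrow> (b = b' \<and> k = k')"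
proof
  assume a: "b < q" "k < n" "b' < q" "k' < n" "1 + b*n + k = 1 + b'*n + k'"
  then have e: "b*n + k = b'*n + k'" by simp
  have "b = (b*n+k) div n" using a(2) by simp
  also have "\<dots> = (b'*n+k') div n" using e by simp
  also have "\<dots> = b'" using a(4) by simp
  finally have "b = b'" .
  then show "b = b' \<and> k = k'" using e by simp
qed auto


lemma len_rows: "p \<in> set (fractal_rows q m) \<Longrightarrow> length p = fractal_cols q m"
proof (induction m arbitrary: p)
  case 0 then show ?case by simp
next
  case (Suc m)
  then obtain a r where "p = rowf q (fractal_cols q m) a r" "r \<in> set (fractal_rows q m)"
    unfolding set_rows_Suc by blast
  then show ?case using Suc.IH by (simp add: rowf_length)
qed

lemma valid_rows: "p \<in> set (fractal_rows q m) \<Longrightarrow> i < length p \<Longrightarrow> p ! i = Some c \<Longrightarrow> c < q"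
proof (induction m arbitrary: p i)
  case 0 then show ?case by simp
next
  case (Suc m)
  let ?n = "fractal_cols q m"
  obtain a r where ar: "p = rowf q ?n a r" "r \<in> set (fractal_rows q m)" "a < q"
    using Suc.prems(1) unfolding set_rows_Suc by blast
  have lr: "length r = ?n" using ar len_rows by blast
  show ?case
  proof (cases "i = 0")
    case True then show ?thesis using ar Suc.prems by (simp add: rowf_nth0)
  next
    case False
    then obtain b k where bk: "b < q" "k < ?n" "i = 1 + b * ?n + k"
      using decomp[of i q ?n] Suc.prems(2) ar lr rowf_length by auto
    show ?thesis using Suc.prems(3) Suc.IH[of r k] ar lr bk rowf_nth[OF lr bk(1,2), of a]
      by (auto split: if_splits)
  qed
qed

lemma nonempty_rows: "q \<ge> 1 \<Longrightarrow> set (fractal_rows q m) \<noteq> {}"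
proof (induction m)
  case 0 then show ?case by simp
next
  case (Suc m)
  then obtain r where "r \<in> set (fractal_rows q m)" by (metis ex_in_conv)
  then have "rowf q (fractal_cols q m) 0 r \<in> set (fractal_rows q (Suc m))"
    using Suc.prems by (intro mem_rows_Suc) auto
  then show ?case by auto
qed

lemma somecol_rows: "q \<ge> 1 \<Longrightarrow> k < fractal_cols q m \<Longrightarrow> \<exists>r\<in>set (fractal_rows q m). r ! k \<noteq> None"
proof (induction m arbitrary: k)
  case 0 then show ?case by simp
next
  case (Suc m)
  let ?n = "fractal_cols q m"
  show ?case
  proof (cases "k = 0")
    case True
    obtain r where r: "r \<in> set (fractal_rows q m)" using nonempty_rows[OF Suc.prems(1)] by (metis ex_in_conv)
    then have "rowf q ?n 0 r \<in> set (fractal_rows q (Suc m))"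
      using Suc.prems by (intro mem_rows_Suc) auto
    then show ?thesis using True rowf_nth0 by fastforce
  next
    case False
    then obtain b k' where bk: "b < q" "k' < ?n" "k = 1 + b * ?n + k'"
      using decomp[of k q ?n] Suc.prems(2) by auto
    obtain r where r: "r \<in> set (fractal_rows q m)" "r ! k' \<noteq> None" using Suc.IH[OF Suc.prems(1) bk(2)] by auto
    have lr: "length r = ?n" using r len_rows by blast
    have "rowf q ?n b r \<in> set (fractal_rows q (Suc m))"
      using bk r by (intro mem_rows_Suc) auto
    moreover have "rowf q ?n b r ! k = r ! k'" using rowf_nth[OF lr bk(1,2)] bk by simp
    ultimately show ?thesis using r by metis
  qed
qed

lemma concat_map_product: "concat (map (\<lambda>a. map (f a) ys) xs) = map (case_prod f) (List.product xs ys)"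
  by (induction xs) auto

lemma rowf_inj: assumes "length r = n" "length r' = n" "a < q" "rowf q n a r = rowf q n a' r'"
  shows "a = a' \<and> r = r'"
proof -
  have aa: "a = a'" using assms(4) rowf_nth0[of q n a r] rowf_nth0[of q n a' r'] by simp
  have "r = r'"
  proof (rule nth_equalityI)
    show "length r = length r'" using assms by simp
    fix k assume "k < length r"
    then have k: "k < n" using assms by simp
    have "r ! k = rowf q n a r ! (1 + a*n + k)" using rowf_nth[OF assms(1) assms(3) k, of a] by simp
    also have "\<dots> = rowf q n a' r' ! (1 + a*n + k)" using assms(4) by simp
    also have "\<dots> = r' ! k" using rowf_nth[OF assms(2) assms(3) k, of a'] aa by simp
    finally show "r ! k = r' ! k" .
  qed
  then show ?thesis using aa by simp
qed

lemma distinct_rows: "distinct (fractal_rows q m)"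
proof (induction m)
  case 0 then show ?case by simp
next
  case (Suc m)
  let ?n = "fractal_cols q m"
  have e: "fractal_rows q (Suc m) = map (case_prod (rowf q ?n)) (List.product [0..<q] (fractal_rows q m))"
    unfolding rows_Suc by (rule concat_map_product)
  have "inj_on (case_prod (rowf q ?n)) (set (List.product [0..<q] (fractal_rows q m)))"
  proof (rule inj_onI)
    fix x y assume x: "x \<in> set (List.product [0..<q] (fractal_rows q m))"
      and y: "y \<in> set (List.product [0..<q] (fractal_rows q m))"
      and e: "case_prod (rowf q ?n) x = case_prod (rowf q ?n) y"
    obtain a r where "x = (a, r)" by fastforce
    moreover obtain a' r' where "y = (a', r')" by fastforce
    ultimately show "x = y" using x y e rowf_inj[of r ?n r' a q a'] len_rows by auto
  qed
  then show ?case unfolding e using Suc.IH by (simp add: distinct_map distinct_product)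
qed

definition stripe :: "nat \<Rightarrow> nat \<Rightarrow> nat list \<Rightarrow> nat list" where
  "stripe n a x = map (\<lambda>k. x ! (1 + a*n + k)) [0..<n]"

lemma subcube_rowf: assumes "length r = n" "a < q"
  shows "x \<in> subcube q (rowf q n a r) \<longleftrightarrow>
     x \<in> zq_space q (1 + q*n) \<and> x ! 0 = a \<and> stripe n a x \<in> subcube q r"
proof
  assume x: "x \<in> subcube q (rowf q n a r)"
  then have lx: "length x = 1 + q*n" and all: "\<And>i. i < 1+q*n \<Longrightarrow> x ! i < q \<and>
      (case rowf q n a r ! i of None \<Rightarrow> True | Some c \<Rightarrow> x ! i = c)"
    unfolding subcube_def using rowf_length[OF assms(1)] by auto
  have "x \<in> zq_space q (1+q*n)" using lx all unfolding zq_space_def by auto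
  moreover have "x ! 0 = a" using all[of 0] by (simp add: rowf_nth0)
  moreover have "stripe n a x \<in> subcube q r"
    unfolding subcube_def stripe_def mem_Collect_eq
  proof (intro conjI allI impI)
    show "length (map (\<lambda>k. x ! (1 + a * n + k)) [0..<n]) = length r" using assms by simp
  next
    fix k assume k: "k < length r"
    then have k': "k < n" using assms(1) by simp
    have lt: "1 + a*n + k < 1 + q*n"
    proof -
      have "a*n + k < a*n + n" using k' by simp
      also have "\<dots> = Suc a * n" by simp
      also have "\<dots> \<le> q * n" using assms(2) by (intro mult_right_mono) auto
      finally show ?thesis by simp
    qed
    show "map (\<lambda>k. x ! (1 + a * n + k)) [0..<n] ! k < q"
      using all[OF lt] k' by simp
    show "case r ! k of None \<Rightarrow> True | Some c \<Rightarrow> map (\<lambda>k. x ! (1 + a * n + k)) [0..<n] ! k = c"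
      using all[OF lt] k' rowf_nth[OF assms(1) assms(2) k', of a] by (auto split: option.splits)
  qed
  ultimately show "x \<in> zq_space q (1 + q*n) \<and> x ! 0 = a \<and> stripe n a x \<in> subcube q r" by simp
next
  assume h: "x \<in> zq_space q (1 + q*n) \<and> x ! 0 = a \<and> stripe n a x \<in> subcube q r"
  then have lx: "length x = 1 + q*n" and xq: "\<And>i. i < 1+q*n \<Longrightarrow> x ! i < q"
    unfolding zq_space_def by auto
  have st: "\<And>k c. k < n \<Longrightarrow> r ! k = Some c \<Longrightarrow> x ! (1 + a*n + k) = c"
  proof -
    fix k c assume "k < n" "r ! k = Some c"
    then show "x ! (1 + a*n + k) = c" using h assms(1) unfolding subcube_def stripe_def
      by (auto dest!: spec[of _ k])
  qed
  show "x \<in> subcube q (rowf q n a r)"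
    unfolding subcube_def
  proof (safe)
    show "length x = length (rowf q n a r)" using lx rowf_length[OF assms(1)] by simp
  next
    fix i assume "i < length (rowf q n a r)"
    then have i: "i < 1 + q*n" using rowf_length[OF assms(1)] by simp
    show "x ! i < q" using xq[OF i] .
    show "case rowf q n a r ! i of None \<Rightarrow> True | Some c \<Rightarrow> x ! i = c"
    proof (cases "i = 0")
      case True then show ?thesis using h by (simp add: rowf_nth0)
    next
      case False
      then obtain b k where bk: "b < q" "k < n" "i = 1 + b*n + k" using decomp[OF i] by auto
      show ?thesis using rowf_nth[OF assms(1) bk(1,2), of a] st[OF bk(2)] bk(3)
        by (auto split: option.splits)
    qed
  qed
qed


lemma stripe_zq: assumes "x \<in> zq_space q (1 + q*n)" "a < q" shows "stripe n a x \<in> zq_space q n"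
  unfolding zq_space_def stripe_def
proof (intro CollectI conjI allI impI)
  show "length (map (\<lambda>k. x ! (1 + a * n + k)) [0..<n]) = n" by simp
  fix k assume k: "k < n"
  have "a*n + k < a*n + n" using k by simp
  also have "\<dots> = Suc a * n" by simp
  also have "\<dots> \<le> q * n" using assms(2) by (intro mult_right_mono) auto
  finally have "1 + a*n + k < 1 + q*n" by simp
  then show "map (\<lambda>k. x ! (1 + a * n + k)) [0..<n] ! k < q" using assms(1) k unfolding zq_space_def by simp
qed

lemma cover_rows: "x \<in> zq_space q (fractal_cols q m) \<Longrightarrow> \<exists>p\<in>set (fractal_rows q m). x \<in> subcube q p"
proof (induction m arbitrary: x)
  case 0 then show ?case by (simp add: zq_space_def subcube_def)
next
  case (Suc m)
  let ?n = "fractal_cols q m"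
  have x: "x \<in> zq_space q (1 + q * ?n)" using Suc.prems by simp
  define a where "a = x ! 0"
  have a: "a < q" using x unfolding a_def zq_space_def by auto
  obtain r where r: "r \<in> set (fractal_rows q m)" "stripe ?n a x \<in> subcube q r"
    using Suc.IH[OF stripe_zq[OF x a]] by auto
  have lr: "length r = ?n" using r len_rows by blast
  have "x \<in> subcube q (rowf q ?n a r)" using subcube_rowf[OF lr a] x r a_def by simp
  then show ?case using mem_rows_Suc[OF a r(1)] by blast
qed

lemma uniq_rows: "p \<in> set (fractal_rows q m) \<Longrightarrow> p' \<in> set (fractal_rows q m) \<Longrightarrow>
   x \<in> subcube q p \<Longrightarrow> x \<in> subcube q p' \<Longrightarrow> p = p'"
proof (induction m arbitrary: x p p')
  case 0 then show ?case by simp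
next
  case (Suc m)
  let ?n = "fractal_cols q m"
  obtain a r where ar: "p = rowf q ?n a r" "r \<in> set (fractal_rows q m)" "a < q"
    using Suc.prems(1) unfolding set_rows_Suc by blast
  obtain a' r' where ar': "p' = rowf q ?n a' r'" "r' \<in> set (fractal_rows q m)" "a' < q"
    using Suc.prems(2) unfolding set_rows_Suc by blast
  have lr: "length r = ?n" using ar len_rows by blast
  have lr': "length r' = ?n" using ar' len_rows by blast
  have h1: "x ! 0 = a" "stripe ?n a x \<in> subcube q r"
    using subcube_rowf[OF lr ar(3)] Suc.prems(3) ar(1) by auto
  have h2: "x ! 0 = a'" "stripe ?n a' x \<in> subcube q r'"
    using subcube_rowf[OF lr' ar'(3)] Suc.prems(4) ar'(1) by auto
  have "a = a'" using h1 h2 by simp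
  then have "r = r'" using Suc.IH[OF ar(2) ar'(2)] h1 h2 by simp
  then show ?case using ar ar' \<open>a = a'\<close> by simp
qed

definition ptx :: "(nat \<Rightarrow> nat) \<Rightarrow> nat list \<Rightarrow> nat list" where
  "ptx \<sigma> x = map (\<lambda>j. x ! \<sigma> j) [0..<length x]"

lemma subcube_pc: assumes s: "\<sigma> permutes {..<n}" and lp: "length p = n" and lx: "length x = n"
  shows "x \<in> subcube q (permute_cols \<sigma> p) \<longleftrightarrow> ptx (inv \<sigma>) x \<in> subcube q p"
proof -
  have si: "inv \<sigma> permutes {..<n}" using s by (rule permutes_inv)
  have A: "x \<in> subcube q (permute_cols \<sigma> p) \<longleftrightarrow>
     (\<forall>j<n. x ! j < q \<and> (case p ! \<sigma> j of None \<Rightarrow> True | Some a \<Rightarrow> x ! j = a))"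
    unfolding subcube_def permute_cols_def using lp lx by auto
  have B: "ptx (inv \<sigma>) x \<in> subcube q p \<longleftrightarrow>
     (\<forall>i<n. x ! inv \<sigma> i < q \<and> (case p ! i of None \<Rightarrow> True | Some a \<Rightarrow> x ! inv \<sigma> i = a))"
    unfolding subcube_def ptx_def using lp lx by (auto split: option.splits)
  have "(\<forall>j<n. x ! j < q \<and> (case p ! \<sigma> j of None \<Rightarrow> True | Some a \<Rightarrow> x ! j = a)) \<longleftrightarrow>
     (\<forall>i<n. x ! inv \<sigma> i < q \<and> (case p ! i of None \<Rightarrow> True | Some a \<Rightarrow> x ! inv \<sigma> i = a))"
  proof
    assume h: "\<forall>j<n. x ! j < q \<and> (case p ! \<sigma> j of None \<Rightarrow> True | Some a \<Rightarrow> x ! j = a)"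
    show "\<forall>i<n. x ! inv \<sigma> i < q \<and> (case p ! i of None \<Rightarrow> True | Some a \<Rightarrow> x ! inv \<sigma> i = a)"
    proof (intro allI impI)
      fix i assume i: "i < n"
      have "inv \<sigma> i < n" using permutes_in_image[OF si] i by simp
      then show "x ! inv \<sigma> i < q \<and> (case p ! i of None \<Rightarrow> True | Some a \<Rightarrow> x ! inv \<sigma> i = a)"
        using h permutes_inverses(1)[OF s, of i] by metis
    qed
  next
    assume h: "\<forall>i<n. x ! inv \<sigma> i < q \<and> (case p ! i of None \<Rightarrow> True | Some a \<Rightarrow> x ! inv \<sigma> i = a)"
    show "\<forall>j<n. x ! j < q \<and> (case p ! \<sigma> j of None \<Rightarrow> True | Some a \<Rightarrow> x ! j = a)"
    proof (intro allI impI)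
      fix j assume j: "j < n"
      have "\<sigma> j < n" using permutes_in_image[OF s] j by simp
      then show "x ! j < q \<and> (case p ! \<sigma> j of None \<Rightarrow> True | Some a \<Rightarrow> x ! j = a)"
        using h permutes_inverses(2)[OF s, of j] by metis
    qed
  qed
  then show ?thesis using A B by simp
qed


lemma pc_length[simp]: "length (permute_cols \<pi> p) = length p"
  by (simp add: permute_cols_def)

lemma pc_nth: "j < length p \<Longrightarrow> permute_cols \<pi> p ! j = p ! \<pi> j"
  by (simp add: permute_cols_def)

lemma aut_rows:
  assumes "q \<ge> 2" "\<pi> permutes {..<fractal_cols q m}"
    "\<forall>r\<in>set (fractal_rows q m). permute_cols \<pi> r \<in> set (fractal_rows q m)"
    "j < fractal_cols q m"
  shows "\<pi> j = j"
  using assms(2-4)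
proof (induction m arbitrary: \<pi> j)
  case 0 then show ?case by simp
next
  case (Suc m)
  let ?n = "fractal_cols q m"
  let ?N = "1 + q * ?n"
  have q1: "q \<ge> 1" using assms(1) by simp
  have perm: "\<pi> permutes {..<?N}" using Suc.prems(1) by simp
  have inN: "\<And>i. i < ?N \<Longrightarrow> \<pi> i < ?N" using permutes_in_image[OF perm] by simp
  have img: "\<And>a r. a < q \<Longrightarrow> r \<in> set (fractal_rows q m) \<Longrightarrow>
     \<exists>a' r'. a' < q \<and> r' \<in> set (fractal_rows q m) \<and> permute_cols \<pi> (rowf q ?n a r) = rowf q ?n a' r'"
  proof -
    fix a r assume "a < q" "r \<in> set (fractal_rows q m)"
    then have "permute_cols \<pi> (rowf q ?n a r) \<in> set (fractal_rows q (Suc m))"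
      using Suc.prems(2) mem_rows_Suc by blast
    then show "\<exists>a' r'. a' < q \<and> r' \<in> set (fractal_rows q m) \<and> permute_cols \<pi> (rowf q ?n a r) = rowf q ?n a' r'"
      unfolding set_rows_Suc by blast
  qed
  obtain r0 where r0: "r0 \<in> set (fractal_rows q m)" using nonempty_rows[OF q1] by (metis ex_in_conv)
  have lr0: "length r0 = ?n" using r0 len_rows by blast
  have p0: "\<pi> 0 = 0"
  proof (rule ccontr)
    assume ne: "\<pi> 0 \<noteq> 0"
    have "\<pi> 0 < ?N" using inN by simp
    then obtain b k where bk: "b < q" "k < ?n" "\<pi> 0 = 1 + b * ?n + k" using decomp ne by blast
    define a where "a = (if b = 0 then 1 else 0::nat)"
    have a: "a < q" "a \<noteq> b" using assms(1) unfolding a_def by auto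
    obtain a' r' where ar': "a' < q" "r' \<in> set (fractal_rows q m)"
      "permute_cols \<pi> (rowf q ?n a r0) = rowf q ?n a' r'" using img[OF a(1) r0] by blast
    have "permute_cols \<pi> (rowf q ?n a r0) ! 0 = rowf q ?n a r0 ! (\<pi> 0)"
      by (rule pc_nth) (simp add: rowf_length[OF lr0])
    also have "\<dots> = None" using bk rowf_nth[OF lr0 bk(1,2), of a] a by simp
    finally show False using ar'(3) rowf_nth0 by simp
  qed
  have st: "\<And>j a k. j < ?N \<Longrightarrow> j \<noteq> 0 \<Longrightarrow> a < q \<Longrightarrow> k < ?n \<Longrightarrow> \<pi> j = 1 + a * ?n + k \<Longrightarrow>
      \<exists>k'<?n. j = 1 + a * ?n + k'"
  proof -
    fix j a k assume j: "j < ?N" "j \<noteq> 0" and a: "a < q" and k: "k < ?n" and pj: "\<pi> j = 1 + a * ?n + k"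
    obtain b k' where bk: "b < q" "k' < ?n" "j = 1 + b * ?n + k'" using decomp[OF j] by blast
    obtain r where r: "r \<in> set (fractal_rows q m)" "r ! k \<noteq> None" using somecol_rows[OF q1 k] by blast
    have lr: "length r = ?n" using r len_rows by blast
    obtain a' r' where ar': "a' < q" "r' \<in> set (fractal_rows q m)"
      "permute_cols \<pi> (rowf q ?n a r) = rowf q ?n a' r'" using img[OF a r(1)] by blast
    have lr': "length r' = ?n" using ar' len_rows by blast
    have "permute_cols \<pi> (rowf q ?n a r) ! 0 = rowf q ?n a r ! (\<pi> 0)"
      by (rule pc_nth) (simp add: rowf_length[OF lr])
    then have "a' = a" using ar'(3) p0 rowf_nth0 by simp
    have "permute_cols \<pi> (rowf q ?n a r) ! j = rowf q ?n a r ! (\<pi> j)"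
      by (rule pc_nth) (use j in \<open>simp add: rowf_length[OF lr]\<close>)
    also have "\<dots> = r ! k" using pj rowf_nth[OF lr a k, of a] by simp
    finally have "rowf q ?n a r' ! j \<noteq> None" using ar'(3) \<open>a' = a\<close> r(2) by simp
    then have "b = a" using rowf_nth[OF lr' bk(1,2), of a] bk(3) by (auto split: if_splits)
    then show "\<exists>k'<?n. j = 1 + a * ?n + k'" using bk by blast
  qed
  have main: "\<And>a k. a < q \<Longrightarrow> k < ?n \<Longrightarrow> \<pi> (1 + a * ?n + k) = 1 + a * ?n + k"
  proof -
    fix a assume a: "a < q"
    have blk: "\<And>k. k < ?n \<Longrightarrow> \<exists>k''<?n. \<pi> (1 + a * ?n + k) = 1 + a * ?n + k''"
    proof -
      fix k assume k: "k < ?n"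
      let ?j = "1 + a * ?n + k"
      have jN: "?j < ?N"
      proof -
        have "a*?n + k < a*?n + ?n" using k by simp
        also have "\<dots> = Suc a * ?n" by simp
        also have "\<dots> \<le> q * ?n" using a by (intro mult_right_mono) auto
        finally show ?thesis by simp
      qed
      have "\<pi> ?j \<noteq> 0"
      proof
        assume "\<pi> ?j = 0"
        then have "\<pi> ?j = \<pi> 0" using p0 by simp
        then have "?j = 0" using permutes_inj[OF perm] by (simp add: inj_eq)
        then show False by simp
      qed
      then obtain b k'' where bk: "b < q" "k'' < ?n" "\<pi> ?j = 1 + b * ?n + k''"
        using decomp inN[OF jN] by blast
      obtain k' where k': "k' < ?n" "?j = 1 + b * ?n + k'" using st[OF jN _ bk] by auto
      have "b = a" using stripe_unique[OF a k bk(1) k'(1)] k'(2) by simp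
      then show "\<exists>k''<?n. \<pi> ?j = 1 + a * ?n + k''" using bk by blast
    qed
    define \<pi>a where "\<pi>a = (\<lambda>k. if k < ?n then \<pi> (1 + a * ?n + k) - (1 + a * ?n) else k)"
    have pia: "\<And>k. k < ?n \<Longrightarrow> \<pi>a k < ?n \<and> \<pi> (1 + a * ?n + k) = 1 + a * ?n + \<pi>a k"
    proof -
      fix k assume k: "k < ?n"
      obtain k'' where "k'' < ?n" "\<pi> (1 + a * ?n + k) = 1 + a * ?n + k''" using blk[OF k] by blast
      then show "\<pi>a k < ?n \<and> \<pi> (1 + a * ?n + k) = 1 + a * ?n + \<pi>a k" using k unfolding \<pi>a_def by simp
    qed
    have inj: "inj_on \<pi>a {..<?n}"
    proof (rule inj_onI)
      fix k1 k2 assume k: "k1 \<in> {..<?n}" "k2 \<in> {..<?n}" "\<pi>a k1 = \<pi>a k2"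
      then have "\<pi> (1 + a * ?n + k1) = \<pi> (1 + a * ?n + k2)" using pia by simp
      then have "1 + a * ?n + k1 = 1 + a * ?n + k2" using permutes_inj[OF perm] by (simp add: inj_eq)
      then show "k1 = k2" by simp
    qed
    have sub: "\<pi>a ` {..<?n} \<subseteq> {..<?n}" using pia by auto
    have "\<pi>a ` {..<?n} = {..<?n}" using endo_inj_surj[OF _ sub inj] by simp
    then have "bij_betw \<pi>a {..<?n} {..<?n}" using inj by (simp add: bij_betw_def)
    then have piaperm: "\<pi>a permutes {..<?n}"
      by (rule bij_imp_permutes) (simp add: \<pi>a_def)
    have cond: "\<forall>r\<in>set (fractal_rows q m). permute_cols \<pi>a r \<in> set (fractal_rows q m)"
    proof
      fix r assume r: "r \<in> set (fractal_rows q m)"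
      have lr: "length r = ?n" using r len_rows by blast
      obtain a' r' where ar': "a' < q" "r' \<in> set (fractal_rows q m)"
        "permute_cols \<pi> (rowf q ?n a r) = rowf q ?n a' r'" using img[OF a r] by blast
      have lr': "length r' = ?n" using ar' len_rows by blast
      have "permute_cols \<pi> (rowf q ?n a r) ! 0 = rowf q ?n a r ! (\<pi> 0)"
        by (rule pc_nth) (simp add: rowf_length[OF lr])
      then have aa: "a' = a" using ar'(3) p0 rowf_nth0 by simp
      have "permute_cols \<pi>a r = r'"
      proof (rule nth_equalityI)
        show "length (permute_cols \<pi>a r) = length r'" using lr lr' by simp
        fix k assume "k < length (permute_cols \<pi>a r)"
        then have k: "k < ?n" using lr by simp
        have jN: "1 + a * ?n + k < length (rowf q ?n a r)"
        proof -
          have "a*?n + k < a*?n + ?n" using k by simp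
          also have "\<dots> = Suc a * ?n" by simp
          also have "\<dots> \<le> q * ?n" using a by (intro mult_right_mono) auto
          finally show ?thesis by (simp add: rowf_length[OF lr])
        qed
        have "r' ! k = rowf q ?n a r' ! (1 + a * ?n + k)" using rowf_nth[OF lr' a k, of a] by simp
        also have "\<dots> = permute_cols \<pi> (rowf q ?n a r) ! (1 + a * ?n + k)" using ar'(3) aa by simp
        also have "\<dots> = rowf q ?n a r ! (\<pi> (1 + a * ?n + k))" by (rule pc_nth[OF jN])
        also have "\<dots> = rowf q ?n a r ! (1 + a * ?n + \<pi>a k)" using pia[OF k] by simp
        also have "\<dots> = r ! (\<pi>a k)" using rowf_nth[OF lr a, of "\<pi>a k" a] pia[OF k] by simp
        also have "\<dots> = permute_cols \<pi>a r ! k" using pc_nth[of k r \<pi>a] k lr by simp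
        finally show "permute_cols \<pi>a r ! k = r' ! k" by simp
      qed
      then show "permute_cols \<pi>a r \<in> set (fractal_rows q m)" using ar'(2) by simp
    qed
    fix k assume k: "k < ?n"
    have "\<pi>a k = k" using Suc.IH[OF piaperm cond k] .
    then show "\<pi> (1 + a * ?n + k) = 1 + a * ?n + k" using pia[OF k] by simp
  qed
  show ?case
  proof (cases "j = 0")
    case True then show ?thesis using p0 by simp
  next
    case False
    have "j < ?N" using Suc.prems(3) by simp
    then obtain b k where "b < q" "k < ?n" "j = 1 + b * ?n + k" using decomp False by blast
    then show ?thesis using main by simp
  qed
qed


lemma cols_formula_aux: "fractal_cols (Suc d) m * d + 1 = Suc d ^ m"
proof (induction m)
  case 0 then show ?case by simp
next
  case (Suc m)
  have "fractal_cols (Suc d) (Suc m) * d + 1 = Suc d * (fractal_cols (Suc d) m * d + 1)"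
    by (simp add: algebra_simps)
  also have "\<dots> = Suc d ^ Suc m" using Suc.IH by simp
  finally show ?case .
qed

lemma cols_formula: assumes "q \<ge> 2" shows "(q ^ m - 1) div (q - 1) = fractal_cols q m"
proof -
  obtain d where d: "q = Suc d" "d \<ge> 1" using assms by (cases q) auto
  have "q ^ m - 1 = fractal_cols q m * d" using cols_formula_aux[of d m] d by simp
  then show ?thesis using d by simp
qed

lemma pc_comp: assumes "length r = n" "\<alpha> permutes {..<n}"
  shows "permute_cols \<alpha> (permute_cols \<beta> r) = permute_cols (\<beta> \<circ> \<alpha>) r"
proof -
  have "\<And>j. j < n \<Longrightarrow> \<alpha> j < n" using permutes_in_image[OF assms(2)] by simp
  then show ?thesis unfolding permute_cols_def using assms(1) by simp
qed

lemma pc_id: "permute_cols id r = r"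
  unfolding permute_cols_def by (simp add: map_nth)

lemma pc_inj: assumes "\<sigma> permutes {..<n}" "length r = n" "length r' = n"
  "permute_cols \<sigma> r = permute_cols \<sigma> r'" shows "r = r'"
proof -
  have "permute_cols (inv \<sigma>) (permute_cols \<sigma> r) = permute_cols (inv \<sigma>) (permute_cols \<sigma> r')"
    using assms(4) by simp
  moreover have "permute_cols (inv \<sigma>) (permute_cols \<sigma> r) = r"
    using pc_comp[OF assms(2) permutes_inv[OF assms(1)], of \<sigma>] permutes_inv_o(1)[OF assms(1)] pc_id by simp
  moreover have "permute_cols (inv \<sigma>) (permute_cols \<sigma> r') = r'"
    using pc_comp[OF assms(3) permutes_inv[OF assms(1)], of \<sigma>] permutes_inv_o(1)[OF assms(1)] pc_id by simp
  ultimately show ?thesis by simp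
qed

definition FF :: "nat \<Rightarrow> nat \<Rightarrow> (nat \<Rightarrow> nat) \<Rightarrow> nat option list set" where
  "FF q m \<sigma> = set (map (permute_cols \<sigma>) (fractal_rows q m))"

lemma ptx_zq: assumes "\<sigma> permutes {..<n}" "x \<in> zq_space q n" shows "ptx \<sigma> x \<in> zq_space q n"
  using assms permutes_in_image[OF assms(1)] unfolding zq_space_def ptx_def by auto

lemma FF_partition: assumes s: "\<sigma> permutes {..<fractal_cols q m}"
  shows "subcube_partition q (fractal_cols q m) (FF q m \<sigma>)"
proof -
  let ?n = "fractal_cols q m"
  let ?R = "set (fractal_rows q m)"
  have v: "\<forall>p\<in>FF q m \<sigma>. valid_pattern q ?n p"
  proof
    fix p assume "p \<in> FF q m \<sigma>"
    then obtain r where r: "r \<in> ?R" "p = permute_cols \<sigma> r" unfolding FF_def by auto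
    have lr: "length r = ?n" using r len_rows by blast
    show "valid_pattern q ?n p" unfolding valid_pattern_def
    proof (intro conjI allI impI)
      show "length p = ?n" using r lr by simp
      fix i c assume i: "i < ?n" and pc: "p ! i = Some c"
      have si: "\<sigma> i < length r" using permutes_in_image[OF s] i lr by simp
      have "r ! \<sigma> i = Some c" using pc r(2) pc_nth[of i r \<sigma>] i lr by simp
      then show "c < q" using valid_rows[OF r(1) si] by simp
    qed
  qed
  have d: "\<forall>p\<in>FF q m \<sigma>. \<forall>p'\<in>FF q m \<sigma>. p \<noteq> p' \<longrightarrow> subcube q p \<inter> subcube q p' = {}"
  proof (intro ballI impI)
    fix p p' assume p: "p \<in> FF q m \<sigma>" and p': "p' \<in> FF q m \<sigma>" and ne: "p \<noteq> p'"
    obtain r where r: "r \<in> ?R" "p = permute_cols \<sigma> r" using p unfolding FF_def by auto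
    obtain r' where r': "r' \<in> ?R" "p' = permute_cols \<sigma> r'" using p' unfolding FF_def by auto
    have lr: "length r = ?n" using r len_rows by blast
    have lr': "length r' = ?n" using r' len_rows by blast
    show "subcube q p \<inter> subcube q p' = {}"
    proof (rule ccontr)
      assume "subcube q p \<inter> subcube q p' \<noteq> {}"
      then obtain x where x: "x \<in> subcube q p" "x \<in> subcube q p'" by blast
      have lx: "length x = ?n" using x(1) r(2) lr unfolding subcube_def by simp
      have "ptx (inv \<sigma>) x \<in> subcube q r" using subcube_pc[OF s lr lx] x(1) r(2) by simp
      moreover have "ptx (inv \<sigma>) x \<in> subcube q r'" using subcube_pc[OF s lr' lx] x(2) r'(2) by simp
      ultimately have "r = r'" using uniq_rows[OF r(1) r'(1)] by blast
      then show False using ne r r' by simp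
    qed
  qed
  have u: "(\<Union>p\<in>FF q m \<sigma>. subcube q p) = zq_space q ?n"
  proof
    show "(\<Union>p\<in>FF q m \<sigma>. subcube q p) \<subseteq> zq_space q ?n"
    proof
      fix x assume "x \<in> (\<Union>p\<in>FF q m \<sigma>. subcube q p)"
      then obtain p where p: "p \<in> FF q m \<sigma>" "x \<in> subcube q p" by blast
      have "length p = ?n" using v p(1) unfolding valid_pattern_def by blast
      then show "x \<in> zq_space q ?n" using p(2) unfolding subcube_def zq_space_def by auto
    qed
  next
    show "zq_space q ?n \<subseteq> (\<Union>p\<in>FF q m \<sigma>. subcube q p)"
    proof
      fix x assume x: "x \<in> zq_space q ?n"
      have lx: "length x = ?n" using x unfolding zq_space_def by simp
      obtain r where r: "r \<in> ?R" "ptx (inv \<sigma>) x \<in> subcube q r"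
        using cover_rows[OF ptx_zq[OF permutes_inv[OF s] x]] by blast
      have lr: "length r = ?n" using r len_rows by blast
      have "x \<in> subcube q (permute_cols \<sigma> r)" using subcube_pc[OF s lr lx] r(2) by simp
      moreover have "permute_cols \<sigma> r \<in> FF q m \<sigma>" using r(1) unfolding FF_def by simp
      ultimately show "x \<in> (\<Union>p\<in>FF q m \<sigma>. subcube q p)" by blast
    qed
  qed
  show ?thesis unfolding subcube_partition_def using v d u by blast
qed

lemma FF_star: assumes s: "\<sigma> permutes {..<fractal_cols q m}"
  shows "fractal_star q m (FF q m \<sigma>)"
proof -
  have inj: "inj_on (permute_cols \<sigma>) (set (fractal_rows q m))"
  proof (rule inj_onI)
    fix r r' assume "r \<in> set (fractal_rows q m)" "r' \<in> set (fractal_rows q m)"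
      "permute_cols \<sigma> r = permute_cols \<sigma> r'"
    then show "r = r'" using pc_inj[OF s] len_rows by blast
  qed
  have dist: "distinct (map (permute_cols \<sigma>) (fractal_rows q m))"
    using inj distinct_rows by (simp add: distinct_map)
  show ?thesis unfolding fractal_star_def FF_def
    using permutes_imp_bij[OF s] mset_set_set[OF dist] by auto
qed

lemma star_FF: assumes "fractal_star q m P"
  shows "\<exists>\<sigma>. \<sigma> permutes {..<fractal_cols q m} \<and> P = FF q m \<sigma>"
proof -
  let ?n = "fractal_cols q m"
  obtain \<sigma> where fin: "finite P" and b: "bij_betw \<sigma> {..<?n} {..<?n}"
    and e: "mset_set P = mset (map (permute_cols \<sigma>) (fractal_rows q m))"
    using assms unfolding fractal_star_def by blast
  define \<sigma>' where "\<sigma>' = (\<lambda>j. if j < ?n then \<sigma> j else j)"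
  have "bij_betw \<sigma>' {..<?n} {..<?n}" using b by (rule bij_betw_cong[THEN iffD1, rotated]) (simp add: \<sigma>'_def)
  then have p: "\<sigma>' permutes {..<?n}" by (rule bij_imp_permutes) (simp add: \<sigma>'_def)
  have "P = set_mset (mset_set P)" using fin by simp
  also have "\<dots> = set (map (permute_cols \<sigma>) (fractal_rows q m))" using e by simp
  also have "\<dots> = FF q m \<sigma>'" unfolding FF_def
  proof (rule arg_cong[where f = set], rule map_cong[OF refl])
    fix r assume "r \<in> set (fractal_rows q m)"
    then have "length r = ?n" using len_rows by blast
    then show "permute_cols \<sigma> r = permute_cols \<sigma>' r" unfolding permute_cols_def \<sigma>'_def by simp
  qed
  finally show ?thesis using p by blast
qed

lemma FF_inj: assumes q: "q \<ge> 2" and s: "\<sigma> permutes {..<fractal_cols q m}" and t: "\<tau> permutes {..<fractal_cols q m}"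
  and e: "FF q m \<sigma> = FF q m \<tau>" shows "\<sigma> = \<tau>"
proof -
  let ?n = "fractal_cols q m"
  let ?R = "set (fractal_rows q m)"
  have ti: "inv \<tau> permutes {..<?n}" using permutes_inv[OF t] .
  have pp: "(\<sigma> \<circ> inv \<tau>) permutes {..<?n}" using permutes_compose[OF ti s] .
  have cond: "\<forall>r\<in>?R. permute_cols (\<sigma> \<circ> inv \<tau>) r \<in> ?R"
  proof
    fix r assume r: "r \<in> ?R"
    have lr: "length r = ?n" using r len_rows by blast
    have "permute_cols \<sigma> r \<in> FF q m \<sigma>" using r unfolding FF_def by simp
    then have "permute_cols \<sigma> r \<in> FF q m \<tau>" using e by simp
    then obtain r' where r': "r' \<in> ?R" "permute_cols \<sigma> r = permute_cols \<tau> r'" unfolding FF_def by auto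
    have lr': "length r' = ?n" using r' len_rows by blast
    have "permute_cols (\<sigma> \<circ> inv \<tau>) r = permute_cols (inv \<tau>) (permute_cols \<sigma> r)"
      using pc_comp[OF lr ti] by simp
    also have "\<dots> = permute_cols (inv \<tau>) (permute_cols \<tau> r')" using r'(2) by simp
    also have "\<dots> = r'" using pc_comp[OF lr' ti] permutes_inv_o(1)[OF t] pc_id by simp
    finally show "permute_cols (\<sigma> \<circ> inv \<tau>) r \<in> ?R" using r' by simp
  qed
  show "\<sigma> = \<tau>"
  proof
    fix x show "\<sigma> x = \<tau> x"
    proof (cases "x < ?n")
      case True
      then have tx: "\<tau> x < ?n" using permutes_in_image[OF t] by simp
      have "\<sigma> x = (\<sigma> \<circ> inv \<tau>) (\<tau> x)" using permutes_inverses(2)[OF t] by simp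
      also have "\<dots> = \<tau> x" using aut_rows[OF q pp cond tx] .
      finally show ?thesis .
    next
      case False
      then show ?thesis using permutes_not_in[OF s] permutes_not_in[OF t] by simp
    qed
  qed
qed

theorem mainTheorem8:
  fixes q m :: nat
  assumes "q \<ge> 2" and "m \<ge> 1"
  shows "card {P. subcube_partition q ((q ^ m - 1) div (q - 1)) P \<and> fractal_star q m P}
         = fact ((q ^ m - 1) div (q - 1))"
proof -
  let ?n = "fractal_cols q m"
  have S: "{P. subcube_partition q ?n P \<and> fractal_star q m P} = FF q m ` {\<sigma>. \<sigma> permutes {..<?n}}"
  proof
    show "{P. subcube_partition q ?n P \<and> fractal_star q m P} \<subseteq> FF q m ` {\<sigma>. \<sigma> permutes {..<?n}}"
      using star_FF by blast
    show "FF q m ` {\<sigma>. \<sigma> permutes {..<?n}} \<subseteq> {P. subcube_partition q ?n P \<and> fractal_star q m P}"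
      using FF_partition FF_star by blast
  qed
  have inj: "inj_on (FF q m) {\<sigma>. \<sigma> permutes {..<?n}}"
  proof (rule inj_onI)
    fix \<sigma> \<tau> assume "\<sigma> \<in> {\<sigma>. \<sigma> permutes {..<?n}}" "\<tau> \<in> {\<sigma>. \<sigma> permutes {..<?n}}"
      "FF q m \<sigma> = FF q m \<tau>"
    then show "\<sigma> = \<tau>" using FF_inj[OF assms(1)] by simp
  qed
  have "card {P. subcube_partition q ?n P \<and> fractal_star q m P} = fact ?n"
    unfolding S card_image[OF inj] by (rule card_permutations) auto
  then show ?thesis using cols_formula[OF assms(1)] by simp
qed

end
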